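(* For all program states $(s,h)$ and all $f\in\mathbb{T}$, $$\mathsf{ert}[\![x:=\langle e\rangle]\!](f)(s,h)=\begin{cases} f(s[x\mapsto h(s(e))],h) & \text{if } s(e)\in\mathrm{dom}(h),\\ \infty & \text{if } s(e)\notin\mathrm{dom}(h),\end{cases}$$ where $\mathsf{ert}[\![x:=\langle e\rangle]\!](f)=\inf v\colon [e\mapsto v]\oplus([e\mapsto v]\mathbin{-\!\!\ominus} f[x/v])$ with $v$ a fresh variable.
   Context: Fix a finite set $\mathrm{Vars}$ of variables. A stack is $s\colon\mathrm{Vars}\to\mathbb{N}$; a heap is a partial map $h$ from a finite set $\mathrm{dom}(h)\subseteq\mathbb{N}_{>0}$ to $\mathbb{N}$; $h_1\perp h_2$ means disjoint domains, and then $h_1\star h_2$ is their union. $\mathsf{States}$ is the set of pairs $(s,h)$; $s(e)$ is the value of a heap-independent arithmetic expression $e$; $s[x\mapsto v]$ is the updated stack. $\mathbb{T}$ is the set of functions $\mathsf{States}\to[0,\infty]$. Truncated subtraction: $a\dot- b=\max(a-b,0)$, $\infty\dot- b=\infty$ for finite $b$, $a\dot-\infty=0$. $(f\oplus g)(s,h)=\min\{f(s,h_1)+g(s,h_2)\mid h=h_1\star h_2\}$; $(f\mathbin{-\!\!\ominus} g)(s,h)=\sup\{g(s,h\star h')\dot- f(s,h')\mid h'\perp h\}$; $(\inf v\colon f)(s,h)=\inf_{n\in\mathbb{N}}f(s[v\mapsto n],h)$; $f[x/v](s,h)=f(s[x\mapsto s(v)],h)$. $[e\mapsto e'](s,h)=0$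 if $\mathrm{dom}(h)=\{s(e)\}$ and $h(s(e))=s(e')$, and $\infty$ otherwise. *)

theory Defs
  imports "HOL-Library.Extended_Nonnegative_Real"
begin

type_synonym 'v stack = "'v \<Rightarrow> nat"
type_synonym heap = "nat \<rightharpoonup> nat"
type_synonym 'v state = "'v stack \<times> heap"
type_synonym 'v expectation = "'v state \<Rightarrow> ennreal"
type_synonym 'v aexp = "'v stack \<Rightarrow> nat"

definition is_heap :: "heap \<Rightarrow> bool" where
  "is_heap h \<longleftrightarrow> finite (dom h) \<and> 0 \<notin> dom h"

definition hdisj :: "heap \<Rightarrow> heap \<Rightarrow> bool" where
  "hdisj h1 h2 \<longleftrightarrow> dom h1 \<inter> dom h2 = {}"

definition tsub :: "ennreal \<Rightarrow> ennreal \<Rightarrow> ennreal" where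
  "tsub a b = (if b = \<infinity> then 0 else if a = \<infinity> then \<infinity> else a - b)"

definition sepcon :: "'v expectation \<Rightarrow> 'v expectation \<Rightarrow> 'v expectation" where
  "sepcon f g = (\<lambda>(s, h). Inf {f (s, h1) + g (s, h2) | h1 h2.
      is_heap h1 \<and> is_heap h2 \<and> hdisj h1 h2 \<and> h = h1 ++ h2})"

definition sepimp :: "'v expectation \<Rightarrow> 'v expectation \<Rightarrow> 'v expectation" where
  "sepimp f g = (\<lambda>(s, h). Sup {tsub (g (s, h ++ h')) (f (s, h')) | h'.
      is_heap h' \<and> hdisj h' h})"

definition inf_var :: "'v \<Rightarrow> 'v expectation \<Rightarrow> 'v expectation" where
  "inf_var v f = (\<lambda>(s, h). INF n::nat. f (s(v := n), h))"

definition subst_var :: "'v expectation \<Rightarrow> 'v \<Rightarrow> 'v \<Rightarrow> 'v expectation" where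
  "subst_var f x v = (\<lambda>(s, h). f (s(x := s v), h))"

definition pointsto :: "'v aexp \<Rightarrow> 'v aexp \<Rightarrow> 'v expectation" where
  "pointsto e e' = (\<lambda>(s, h). if dom h = {e s} \<and> h (e s) = Some (e' s) then 0 else \<infinity>)"

definition ert_lookup :: "'v \<Rightarrow> 'v aexp \<Rightarrow> 'v \<Rightarrow> 'v expectation \<Rightarrow> 'v expectation" where
  "ert_lookup x e v f = inf_var v
     (sepcon (pointsto e (\<lambda>s. s v)) (sepimp (pointsto e (\<lambda>s. s v)) (subst_var f x v)))"

end

theory Submission
  imports Defs
begin

lemma singleton_map_eq:
  assumes "dom h1 = {a}" "h1 a = Some b" shows "h1 = [a \<mapsto> b]"
proof
  fix y show "h1 y = [a \<mapsto> b] y"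
    using assms by (cases "y = a") (auto simp: dom_def)
qed

lemma sepimp_val:
  assumes "a \<noteq> 0" "e s' = a" "s' v = b" "a \<notin> dom h2" "is_heap h2"
  shows "sepimp (pointsto e (\<lambda>s. s v)) (subst_var f x v) (s', h2)
         = f (s'(x := b), h2 ++ [a \<mapsto> b])"
proof -
  let ?V = "f (s'(x := b), h2 ++ [a \<mapsto> b])"
  let ?S = "{tsub (subst_var f x v (s', h2 ++ h')) (pointsto e (\<lambda>s. s v) (s', h')) | h'.
      is_heap h' \<and> hdisj h' h2}"
  have mem: "?V \<in> ?S"
  proof -
    have "is_heap [a \<mapsto> b]" using assms(1) by (simp add: is_heap_def)
    moreover have "hdisj [a \<mapsto> b] h2" using assms(4) by (simp add: hdisj_def)
    moreover have "tsub (subst_var f x v (s', h2 ++ [a \<mapsto> b])) (pointsto e (\<lambda>s. s v) (s', [a \<mapsto> b])) = ?V"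
      using assms(2,3) by (simp add: tsub_def subst_var_def pointsto_def)
    ultimately show ?thesis by (intro CollectI exI[of _ "[a \<mapsto> b]"]) simp
  qed
  have le: "tsub (subst_var f x v (s', h2 ++ h')) (pointsto e (\<lambda>s. s v) (s', h')) \<le> ?V" for h'
  proof -
    define y where "y = tsub (subst_var f x v (s', h2 ++ h')) (pointsto e (\<lambda>s. s v) (s', h'))"
    note y = y_def
    have "y \<le> ?V"
    proof (cases "dom h' = {a} \<and> h' a = Some b")
      case True
      then have "h' = [a \<mapsto> b]" using singleton_map_eq[of h' a b] by simp
      have "pointsto e (\<lambda>s. s v) (s', h') = 0"
        using True assms(2,3) by (simp add: pointsto_def)
      then have "y = subst_var f x v (s', h2 ++ h')" using y by (simp add: tsub_def)
      then show ?thesis using \<open>h' = [a \<mapsto> b]\<close> assms(3) by (simp add: subst_var_def)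
    next
      case False
      have "pointsto e (\<lambda>s. s v) (s', h') = \<infinity>"
        using False assms(2,3) by (simp add: pointsto_def)
      then have "y = 0" using y by (simp add: tsub_def)
      then show ?thesis by simp
    qed
    then show ?thesis by (simp add: y_def)
  qed
  have "Sup ?S \<le> ?V"
    by (rule Sup_least) (use le in blast)
  moreover have "?V \<le> Sup ?S"
    using mem by (rule Sup_upper)
  ultimately have "Sup ?S = ?V" by (rule antisym)
  then show ?thesis by (simp add: sepimp_def)
qed

lemma sepcon_inf:
  assumes "\<And>h1 h2. is_heap h1 \<Longrightarrow> is_heap h2 \<Longrightarrow> hdisj h1 h2 \<Longrightarrow> h = h1 ++ h2 \<Longrightarrow>
             dom h1 = {e s'} \<Longrightarrow> h1 (e s') = Some (s' v) \<Longrightarrow> False"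
  shows "sepcon (pointsto e (\<lambda>s. s v)) g (s', h) = \<infinity>"
proof -
  have "\<forall>y \<in> {pointsto e (\<lambda>s. s v) (s', h1) + g (s', h2) | h1 h2.
      is_heap h1 \<and> is_heap h2 \<and> hdisj h1 h2 \<and> h = h1 ++ h2}. y = top"
    using assms by (fastforce simp: pointsto_def)
  then show ?thesis unfolding sepcon_def by (simp add: Inf_top_conv)
qed

theorem mainTheorem13:
  fixes x v :: 'v and e :: "'v aexp" and f :: "'v expectation"
    and s :: "'v stack" and h :: heap
  assumes "is_heap h"
    and fresh_x: "v \<noteq> x"
    and fresh_e: "\<forall>s' n. e (s'(v := n)) = e s'"
    and fresh_f: "\<forall>s' h' n. f (s'(v := n), h') = f (s', h')"
  shows "ert_lookup x e v f (s, h) =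
           (if e s \<in> dom h then f (s(x := the (h (e s))), h) else \<infinity>)"
proof -
  let ?P = "pointsto e (\<lambda>s. s v)"
  let ?G = "subst_var f x v"
  let ?T = "\<lambda>n. sepcon ?P (sepimp ?P ?G) (s(v := n), h)"
  have E: "ert_lookup x e v f (s, h) = (INF n. ?T n)"
    by (simp add: ert_lookup_def inf_var_def)
  define a where "a = e s"
  have ea: "e (s(v := n)) = a" for n using fresh_e a_def by simp
  have domsplit: "a \<in> dom h \<and> h a = h1 a" if "hdisj h1 h2" "h = h1 ++ h2" "dom h1 = {a}" for h1 h2
    using that by (auto simp: hdisj_def map_add_def dom_def split: option.splits)
  show ?thesis
  proof (cases "a \<in> dom h")
    case False
    have "?T n = \<infinity>" for n
      apply (rule sepcon_inf)
      subgoal premises pr for h1 h2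
      proof -
        have d: "dom h1 = {a}" using pr(5) ea by simp
        have "a \<in> dom h" using domsplit[OF pr(3) pr(4) d] by (rule conjunct1)
        then show False using False by (rule notE[rotated])
      qed
      done
    then show ?thesis using E False a_def by simp
  next
    case True
    then obtain b where hb: "h a = Some b" by auto
    have a0: "a \<noteq> 0" using True assms(1) by (auto simp: is_heap_def)
    have other: "?T n = \<infinity>" if "n \<noteq> b" for n
      apply (rule sepcon_inf)
      subgoal premises pr for h1 h2
      proof -
        have d: "dom h1 = {a}" using pr(5) ea by simp
        have "h1 a = Some n" using pr(6) ea by simp
        then show False using domsplit[OF pr(3) pr(4) d] hb that by simp
      qed
      done
    let ?h2 = "h(a := None)"
    have h2heap: "is_heap ?h2" using assms(1) by (auto simp: is_heap_def)
    have hsplit: "h = [a \<mapsto> b] ++ ?h2"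
      using hb by (auto simp: map_add_def split: option.splits)
    have h2back: "?h2 ++ [a \<mapsto> b] = h"
      using hb by (auto simp: map_add_def)
    have sb: "sepimp ?P ?G (s(v := b), ?h2) = f (s(x := b), h)"
      using sepimp_val[of a e "s(v := b)" v b ?h2 f x] a0 ea h2heap h2back fresh_f fresh_x
      by (simp add: fun_upd_twist[OF fresh_x])
    have setb: "{?P (s(v := b), h1) + sepimp ?P ?G (s(v := b), h2) | h1 h2.
      is_heap h1 \<and> is_heap h2 \<and> hdisj h1 h2 \<and> h = h1 ++ h2}
      \<subseteq> {f (s(x := b), h), \<infinity>}"
    proof
      fix y assume "y \<in> {?P (s(v := b), h1) + sepimp ?P ?G (s(v := b), h2) | h1 h2.
      is_heap h1 \<and> is_heap h2 \<and> hdisj h1 h2 \<and> h = h1 ++ h2}"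
      then obtain h1 h2 where y: "y = ?P (s(v := b), h1) + sepimp ?P ?G (s(v := b), h2)"
        and hh: "is_heap h1" "is_heap h2" "hdisj h1 h2" "h = h1 ++ h2" by blast
      show "y \<in> {f (s(x := b), h), \<infinity>}"
      proof (cases "dom h1 = {a} \<and> h1 a = Some b")
        case True
        then have h1: "h1 = [a \<mapsto> b]" using singleton_map_eq[of h1 a b] by simp
        have "h2 = ?h2"
        proof
          fix z show "h2 z = ?h2 z"
            using hh(3,4) h1 by (cases "z = a") (auto simp: hdisj_def map_add_def dom_def split: option.splits)
        qed
        then show ?thesis using y True sb ea by (simp add: pointsto_def)
      next
        case False
        have "?P (s(v := b), h1) = \<infinity>" using False ea by (simp add: pointsto_def)
        then show ?thesis using y by simp
      qed
    qed
    have memb: "f (s(x := b), h) \<in> {?P (s(v := b), h1) + sepimp ?P ?G (s(v := b), h2) | h1 h2.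
      is_heap h1 \<and> is_heap h2 \<and> hdisj h1 h2 \<and> h = h1 ++ h2}"
    proof -
      have "is_heap [a \<mapsto> b]" using a0 by (simp add: is_heap_def)
      moreover have "hdisj [a \<mapsto> b] ?h2" by (simp add: hdisj_def)
      moreover have "?P (s(v := b), [a \<mapsto> b]) = 0" using ea by (simp add: pointsto_def)
      ultimately show ?thesis using h2heap hsplit[symmetric] sb
        by (intro CollectI exI[of _ "[a \<mapsto> b]"] exI[of _ ?h2]) simp
    qed
    let ?Set = "{?P (s(v := b), h1) + sepimp ?P ?G (s(v := b), h2) | h1 h2.
      is_heap h1 \<and> is_heap h2 \<and> hdisj h1 h2 \<and> h = h1 ++ h2}"
    have "Inf ?Set = f (s(x := b), h)"
    proof (rule antisym)
      show "Inf ?Set \<le> f (s(x := b), h)" using memb by (rule Inf_lower)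
      show "f (s(x := b), h) \<le> Inf ?Set"
      proof (rule Inf_greatest)
        fix y assume "y \<in> ?Set"
        then have "y \<in> {f (s(x := b), h), \<infinity>}" by (rule subsetD[OF setb])
        then show "f (s(x := b), h) \<le> y" by auto
      qed
    qed
    then have Tb: "?T b = f (s(x := b), h)"
      unfolding sepcon_def by simp
    have "(INF n. ?T n) = f (s(x := b), h)"
    proof (rule antisym)
      have "(INF n. ?T n) \<le> ?T b" by (rule INF_lower) simp
      then show "(INF n. ?T n) \<le> f (s(x := b), h)" using Tb by simp
      show "f (s(x := b), h) \<le> (INF n. ?T n)"
      proof (rule INF_greatest)
        fix n :: nat
        show "f (s(x := b), h) \<le> ?T n"
        proof (cases "n = b")
          case True then show ?thesis using Tb by simp
        next
          case False then show ?thesis using other[OF False] by simp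
        qed
      qed
    qed
    then show ?thesis using E True hb a_def by simp
  qed
qed

end
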